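(* Let $n\ge2$, and let $\mathcal K\subseteq\mathbb C^n$ be a subset such that for every $V\in\mathcal Z_n$ the set $\mathcal K\cap P^{-1}(V)$ has exactly one element. Then $\mathcal K$ is not closed in $(\mathbb C^n,d_\infty)$.
   Context: $\mathcal Z_n$ denotes the family of all multisets of complex numbers with exactly $n$ elements counted with multiplicity. $\mathbb C^n$ carries the metric $d_\infty(\mathbf u,\mathbf v)=\max_j|u_j-v_j|$. The map $P:\mathbb C^n\to\mathcal Z_n$ sends $(v_1,\dots,v_n)$ to the multiset $\{v_1,\dots,v_n\}$ (with multiplicities); thus the hypothesis says $\mathcal K$ contains exactly one ordering of each multiset of $n$ complex numbers. *)

theory Defs
  imports "HOL-Analysis.Analysis" "HOL-Library.Multiset"
begin

text \<open>Points of C^n are vectors of type complex^'n, with n = CARD('n).\<close>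

definition dinf :: "complex^'n \<Rightarrow> complex^'n \<Rightarrow> real" where
  "dinf u v = Max (range (\<lambda>j. cmod (u $ j - v $ j)))"

definition dinf_closed :: "(complex^'n) set \<Rightarrow> bool" where
  "dinf_closed K \<longleftrightarrow>
     (\<forall>x. (\<forall>e>0. \<exists>y\<in>K. dinf x y < e) \<longrightarrow> x \<in> K)"

definition Pmset :: "complex^'n \<Rightarrow> complex multiset" where
  "Pmset v = image_mset (\<lambda>j. v $ j) (mset_set (UNIV :: 'n set))"

definition Zn :: "nat \<Rightarrow> complex multiset set" where
  "Zn n = {V. size V = n}"

end

theory Submission
  imports Defs
begin

definition uu :: "complex \<Rightarrow> 'n \<Rightarrow> 'n \<Rightarrow> complex^'n" where
  "uu z a b = (\<chi> i. if i = a then z else if i = b then -z else 0)"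

lemma pm_count: "count (Pmset (v::complex^'n)) x = card {i. v $ i = x}"
proof -
  have "count (Pmset v) x = sum (count (mset_set (UNIV::'n set))) ((\<lambda>j. v $ j) -` {x} \<inter> UNIV)"
    unfolding Pmset_def by (simp add: count_image_mset)
  also have "\<dots> = sum (\<lambda>_. 1) {i. v $ i = x}"
    by (intro sum.cong) auto
  finally show ?thesis by simp
qed

lemma Pmset_uu:
  fixes a b :: "'n::finite"
  assumes "a \<noteq> b" "z \<noteq> 0"
  shows "Pmset (uu z a b) = add_mset z (add_mset (-z) (replicate_mset (CARD('n) - 2) 0))"
proof (rule multiset_eqI)
  fix x
  have zz: "z \<noteq> -z" using assms(2) by (simp add: equal_neg_zero)
  have c2: "card (UNIV - {a,b}) = CARD('n) - 2"
    using assms(1) by (simp add: card_Diff_subset)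
  show "count (Pmset (uu z a b)) x = count (add_mset z (add_mset (-z) (replicate_mset (CARD('n) - 2) 0))) x"
    unfolding pm_count
  proof -
    consider "x = z" | "x = -z" | "x = 0" | "x \<noteq> z" "x \<noteq> -z" "x \<noteq> 0" by blast
    then show "card {i. uu z a b $ i = x} = count (add_mset z (add_mset (-z) (replicate_mset (CARD('n) - 2) 0))) x"
    proof cases
      case 1
      then have "{i. uu z a b $ i = x} = {a}" using assms zz by (auto simp: uu_def)
      then show ?thesis using 1 assms zz by auto
    next
      case 2
      then have "{i. uu z a b $ i = x} = {b}" using assms zz by (auto simp: uu_def)
      then show ?thesis using 2 assms zz by auto
    next
      case 3
      then have "{i. uu z a b $ i = x} = UNIV - {a,b}" using assms zz by (auto simp: uu_def)
      then show ?thesis using 3 assms zz c2 by auto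
    next
      case 4
      then have "{i. uu z a b $ i = x} = {}" using assms zz by (auto simp: uu_def)
      then show ?thesis using 4 assms zz by auto
    qed
  qed
qed

lemma uu_structure:
  fixes a b :: "'n::finite" and v :: "complex^'n"
  assumes "a \<noteq> b" "z \<noteq> 0" and P: "Pmset v = Pmset (uu z a b)"
  shows "\<exists>j k. j \<noteq> k \<and> v = uu z j k"
proof -
  have zz: "z \<noteq> -z" using assms(2) by (simp add: equal_neg_zero)
  have cnt: "card {i. v $ i = x} = count (Pmset (uu z a b)) x" for x
    using P pm_count by metis
  have "card {i. v $ i = z} = 1" using cnt[of z] Pmset_uu[OF assms(1,2)] zz by simp
  then obtain j where j: "{i. v $ i = z} = {j}" using card_1_singletonE by blast
  have "card {i. v $ i = -z} = 1" using cnt[of "-z"] Pmset_uu[OF assms(1,2)] zz by simp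
  then obtain k where k: "{i. v $ i = -z} = {k}" using card_1_singletonE by blast
  have "v $ j = z" "v $ k = -z" using j k by auto
  then have jk: "j \<noteq> k" using zz by auto
  have other: "v $ i = 0" if "i \<noteq> j" "i \<noteq> k" for i
  proof (rule ccontr)
    assume nz: "v $ i \<noteq> 0"
    have "v $ i \<noteq> z" using j that by blast
    moreover have "v $ i \<noteq> -z" using k that by blast
    moreover have "card {l. v $ l = v $ i} > 0" by (simp add: card_gt_0_iff) blast
    ultimately show False using cnt[of "v $ i"] Pmset_uu[OF assms(1,2)] nz by simp
  qed
  have "v = uu z j k"
    unfolding uu_def vec_eq_iff using j k other by auto
  then show ?thesis using jk by blast
qed

lemma dinf_le_dist: "dinf (u::complex^'n) v \<le> dist u v"
  unfolding dinf_def
proof (rule Max.boundedI)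
  show "finite (range (\<lambda>j. cmod (u $ j - v $ j)))" by simp
  show "range (\<lambda>j. cmod (u $ j - v $ j)) \<noteq> {}" by simp
  fix x assume "x \<in> range (\<lambda>j. cmod (u $ j - v $ j))"
  then obtain j where "x = cmod (u $ j - v $ j)" by blast
  have "cmod (u $ j - v $ j) = norm ((u - v) $ j)" by simp
  also have "\<dots> \<le> norm (u - v)" by (rule Finite_Cartesian_Product.norm_nth_le)
  also have "\<dots> = dist u v" by (simp add: dist_norm)
  finally show "x \<le> dist u v" using \<open>x = _\<close> by simp
qed

lemma dinf_closed_closed:
  assumes "dinf_closed (K::(complex^'n) set)"
  shows "closed K"
proof -
  have "closure K \<subseteq> K"
  proof
    fix x assume "x \<in> closure K"
    then have "\<forall>e>0. \<exists>y\<in>K. dist x y < e" using closure_approachableD by blast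
    have "\<forall>e>0. \<exists>y\<in>K. dinf x y < e"
    proof (intro allI impI)
      fix e :: real assume "e > 0"
      then obtain y where "y \<in> K" "dist x y < e" using \<open>\<forall>e>0. \<exists>y\<in>K. dist x y < e\<close> by blast
      moreover have "dinf x y \<le> dist x y" by (rule dinf_le_dist)
      ultimately show "\<exists>y\<in>K. dinf x y < e" by force
    qed
    then show "x \<in> K" using assms unfolding dinf_closed_def by blast
  qed
  then show ?thesis using closure_subset_eq by blast
qed

lemma cont_uu: "continuous_on UNIV (\<lambda>t::real. uu (cis (pi * t)) j k)"
  unfolding uu_def
  apply (intro continuous_on_vec_lambda)
  subgoal for i by (cases "i=j"; cases "i=k") (auto intro!: continuous_intros)
  done

theorem theorem4p2:
  fixes K :: "(complex^'n) set"
  assumes "CARD('n) \<ge> 2"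
    and "\<forall>V\<in>Zn CARD('n). \<exists>!v. v \<in> K \<and> Pmset v = V"
  shows "\<not> dinf_closed K"
proof
  assume dc: "dinf_closed K"
  have cK: "closed K" using dinf_closed_closed[OF dc] .
  have "\<exists>a0 b0::'n. a0 \<noteq> b0"
  proof (rule ccontr)
    assume "\<not> (\<exists>a0 b0::'n. a0 \<noteq> b0)"
    then have e: "(UNIV::'n set) = {undefined}" by auto
    have "CARD('n) = 1" unfolding e by simp
    then show False using assms(1) by simp
  qed
  then obtain a0 b0 :: 'n where ab0: "a0 \<noteq> b0" by blast
  define z where "z t = cis (pi * t)" for t :: real
  have znz: "z t \<noteq> 0" for t unfolding z_def by simp
  have inZ: "Pmset (uu w a b) \<in> Zn CARD('n)" if "a \<noteq> b" "w \<noteq> 0" for w and a b :: 'n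
    using Pmset_uu[OF that] assms(1) unfolding Zn_def by simp
  have same: "Pmset (uu w a b) = Pmset (uu w j k)" if "a \<noteq> b" "j \<noteq> k" "w \<noteq> 0" for w and a b j k :: 'n
    using Pmset_uu that by metis
  have uniq: "uu w a b = uu w j k" if "a \<noteq> b" "j \<noteq> k" "w \<noteq> 0" "uu w a b \<in> K" "uu w j k \<in> K"
    for w and a b j k :: 'n
  proof -
    have "\<exists>!v. v \<in> K \<and> Pmset v = Pmset (uu w a b)"
      using bspec[OF assms(2) inZ[OF that(1,3)]] .
    then obtain v where v: "\<And>y. y \<in> K \<and> Pmset y = Pmset (uu w a b) \<Longrightarrow> y = v"
      by (elim ex1E) blast
    have "uu w a b = v" using v that(4) by blast
    moreover have "uu w j k = v" using v that(5) same[OF that(1-3)] by simp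
    ultimately show ?thesis by simp
  qed
  have uu_inj: "a = j \<and> b = k" if "uu w a b = uu w j k" "a \<noteq> b" "j \<noteq> k" "w \<noteq> 0"
    for w and a b j k :: 'n
  proof -
    have ww: "w \<noteq> -w" using that(4) by (simp add: equal_neg_zero)
    have "uu w a b $ a = w" "uu w a b $ b = - w" using that(2) by (auto simp: uu_def)
    then have h: "uu w j k $ a = w" "uu w j k $ b = - w" using that(1) by auto
    have "a = j"
    proof (rule ccontr)
      assume "a \<noteq> j" then show False using h(1) ww that(4) by (auto simp: uu_def split: if_splits)
    qed
    moreover have "b = k"
    proof (rule ccontr)
      assume "b \<noteq> k" then show False using h(2) ww that(4) by (auto simp: uu_def split: if_splits)
    qed
    ultimately show ?thesis by simp
  qed
  have cover: "\<exists>j k. j \<noteq> k \<and> uu (z t) j k \<in> K" for t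
  proof -
    obtain v where v: "v \<in> K" "Pmset v = Pmset (uu (z t) a0 b0)"
    proof -
      have "\<exists>!v. v \<in> K \<and> Pmset v = Pmset (uu (z t) a0 b0)"
        using bspec[OF assms(2) inZ[OF ab0 znz]] .
      then show ?thesis using that by (elim ex1E) blast
    qed
    then show ?thesis using uu_structure[OF ab0 znz v(2)] by blast
  qed
  obtain a b where ab: "a \<noteq> b" "uu (z 0) a b \<in> K" using cover by blast
  define A where "A = (\<lambda>t. uu (z t) a b) -` K"
  define C where "C = (\<Union>p\<in>{p. fst p \<noteq> snd p \<and> p \<noteq> (a,b)}. (\<lambda>t. uu (z t) (fst p) (snd p)) -` K)"
  have clA: "closed A" unfolding A_def z_def
    by (rule closed_vimage[OF cK]) (rule continuous_on_subset[OF cont_uu], simp)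
  have clC: "closed C" unfolding C_def z_def
  proof (rule closed_UN)
    show "finite {p::'n\<times>'n. fst p \<noteq> snd p \<and> p \<noteq> (a,b)}" by simp
    show "\<forall>p\<in>{p. fst p \<noteq> snd p \<and> p \<noteq> (a,b)}. closed ((\<lambda>t. uu (cis (pi * t)) (fst p) (snd p)) -` K)"
    proof
      fix p :: "'n\<times>'n"
      show "closed ((\<lambda>t. uu (cis (pi * t)) (fst p) (snd p)) -` K)"
        by (rule closed_vimage[OF cK]) (rule continuous_on_subset[OF cont_uu], simp)
    qed
  qed
  have cov: "{0..1::real} \<subseteq> A \<union> C"
  proof
    fix t :: real
    obtain j k where "j \<noteq> k" "uu (z t) j k \<in> K" using cover by blast
    note jk = this
    show "t \<in> A \<union> C"
    proof (cases "(j,k) = (a,b)")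
      case True
      then have "t \<in> A" using jk unfolding A_def by simp
      then show ?thesis by simp
    next
      case False
      then have "(j,k) \<in> {p. fst p \<noteq> snd p \<and> p \<noteq> (a,b)}" using jk by simp
      moreover have "t \<in> (\<lambda>t. uu (z t) (fst (j,k)) (snd (j,k))) -` K" using jk by simp
      ultimately have "t \<in> C" unfolding C_def by blast
      then show ?thesis by simp
    qed
  qed
  have disj: "A \<inter> C \<inter> {0..1} = {}"
  proof -
    { fix t assume tA: "t \<in> A" and tC: "t \<in> C"
      from tC obtain p where p: "fst p \<noteq> snd p" "p \<noteq> (a,b)" "uu (z t) (fst p) (snd p) \<in> K"
        unfolding C_def by blast
      have tK: "uu (z t) a b \<in> K" using tA unfolding A_def by simp
      have "uu (z t) a b = uu (z t) (fst p) (snd p)" by (rule uniq[OF ab(1) p(1) znz tK p(3)])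
      then have "a = fst p \<and> b = snd p" by (rule uu_inj[OF _ ab(1) p(1) znz])
      then have False using p(2) by (cases p) simp }
    then show ?thesis by blast
  qed
  have A0: "A \<inter> {0..1} \<noteq> {}"
  proof -
    have "(0::real) \<in> A" using ab(2) unfolding A_def by simp
    then show ?thesis by force
  qed
  have "A \<inter> {0..1} = {} \<or> C \<inter> {0..1} = {}"
    by (rule connected_closedD[OF connected_Icc disj cov clA clC])
  then have C0: "C \<inter> {0..1} = {}" using A0 by simp
  have one: "(1::real) \<in> {0..1}" by simp
  have "1 \<in> A" using cov C0 one by blast
  then have K1: "uu (-1) a b \<in> K" unfolding A_def z_def by simp
  have K0: "uu 1 a b \<in> K" using ab(2) unfolding z_def by simp
  have "uu (-1) a b = uu 1 b a" unfolding uu_def vec_eq_iff using ab(1) by auto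
  then have "uu 1 b a \<in> K" using K1 by simp
  then have "uu 1 a b = uu 1 b a" using uniq[OF ab(1) ab(1)[symmetric], of 1] K0 by simp
  then show False using uu_inj[of 1 a b b a] ab(1) by simp
qed

end
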